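(* Let $\bm X=(X_k:k\in V)$ have standard exponential margins and follow a tree geometric extremal graphical model with gauge $$g(\bm x)=\sum_{\{i,j\}\in E}\big(g_{\{i,j\}}(x_i,x_j)-x_i-x_j\big)+\sum_{k\in V}x_k,$$ where for each edge $g_{\{i,j\}}(x_i,x_j)=\frac{x_i}{\theta_{ij}}+\frac{x_j}{\gamma_{ij}}+\Big(1-\frac{1}{\theta_{ij}}-\frac{1}{\gamma_{ij}}\Big)\min(x_i,x_j)$ with $\theta_{ij},\gamma_{ij}\in(0,1)$. For $k<l$ in $V$, let $\mathrm{pa}(k,l)$ be the set of edges along the shortest path from $k$ to $l$, each written as an ordered pair $(i,j)$ with $i$ the endpoint nearer to $k$. Then $$g_{\{k,l\}}(x_k,x_l)=\frac{x_k}{\max_{(i,j)\in\mathrm{pa}(k,l)}\theta_{ij}}+\frac{x_l}{\max_{(i,j)\in\mathrm{pa}(k,l)}\gamma_{ij}}+\Big(1-\frac{1}{\max_{(i,j)\in\mathrm{pa}(k,l)}\theta_{ij}}-\frac{1}{\max_{(i,j)\in\mathrm{pa}(k,l)}\gamma_{ij}}\Big)\min(x_k,x_l).$$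
   Context: A tree is a connected acyclic graph $(V,E)$. $g_{\{k,l\}}(x_k,x_l)=\min_{x_s\ge0,\,s\notin\{k,l\}}g(\bm x)$ is the bivariate marginal gauge. The parameterization of an edge's gauge depends on orientation: writing the edge as $(j,i)$ instead of $(i,j)$ corresponds to $\theta_{ji}=\gamma_{ij}$ and $\gamma_{ji}=\theta_{ij}$. *)

theory Defs
  imports Complex_Main
begin

text \<open>Undirected graph on vertex set V, each edge stored once as an ordered pair (i,j);
  the parameters theta, gamma of an edge refer to this stored orientation.\<close>

definition adj :: "('v \<times> 'v) set \<Rightarrow> 'v \<Rightarrow> 'v \<Rightarrow> bool" where
  "adj E i j \<longleftrightarrow> (i, j) \<in> E \<or> (j, i) \<in> E"

definition walk :: "('v \<times> 'v) set \<Rightarrow> 'v list \<Rightarrow> 'v \<Rightarrow> 'v \<Rightarrow> bool" where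
  "walk E ps u v \<longleftrightarrow> ps \<noteq> [] \<and> hd ps = u \<and> last ps = v \<and>
     (\<forall>n. Suc n < length ps \<longrightarrow> adj E (ps ! n) (ps ! Suc n))"

definition simple_path :: "('v \<times> 'v) set \<Rightarrow> 'v list \<Rightarrow> 'v \<Rightarrow> 'v \<Rightarrow> bool" where
  "simple_path E ps u v \<longleftrightarrow> walk E ps u v \<and> distinct ps"

definition is_graph :: "'v set \<Rightarrow> ('v \<times> 'v) set \<Rightarrow> bool" where
  "is_graph V E \<longleftrightarrow> finite V \<and> E \<subseteq> V \<times> V \<and> (\<forall>i. (i, i) \<notin> E)
     \<and> (\<forall>i j. (i, j) \<in> E \<longrightarrow> (j, i) \<notin> E)"

definition connected_graph :: "'v set \<Rightarrow> ('v \<times> 'v) set \<Rightarrow> bool" where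
  "connected_graph V E \<longleftrightarrow> (\<forall>u\<in>V. \<forall>v\<in>V. \<exists>ps. walk E ps u v)"

definition acyclic_graph :: "('v \<times> 'v) set \<Rightarrow> bool" where
  "acyclic_graph E \<longleftrightarrow> \<not> (\<exists>ps. length ps \<ge> 3 \<and> distinct ps \<and>
      (\<forall>n. Suc n < length ps \<longrightarrow> adj E (ps ! n) (ps ! Suc n)) \<and> adj E (last ps) (hd ps))"

definition is_tree :: "'v set \<Rightarrow> ('v \<times> 'v) set \<Rightarrow> bool" where
  "is_tree V E \<longleftrightarrow> V \<noteq> {} \<and> is_graph V E \<and> connected_graph V E \<and> acyclic_graph E"

definition edge_gauge :: "real \<Rightarrow> real \<Rightarrow> real \<Rightarrow> real \<Rightarrow> real" where
  "edge_gauge th ga a b = a / th + b / ga + (1 - 1 / th - 1 / ga) * min a b"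

definition tree_gauge :: "'v set \<Rightarrow> ('v \<times> 'v) set \<Rightarrow> ('v \<times> 'v \<Rightarrow> real) \<Rightarrow> ('v \<times> 'v \<Rightarrow> real)
    \<Rightarrow> ('v \<Rightarrow> real) \<Rightarrow> real" where
  "tree_gauge V E \<theta> \<gamma> x =
     (\<Sum>(i, j)\<in>E. edge_gauge (\<theta> (i, j)) (\<gamma> (i, j)) (x i) (x j) - x i - x j) + (\<Sum>k\<in>V. x k)"

definition marginal2 :: "'v set \<Rightarrow> (('v \<Rightarrow> real) \<Rightarrow> real) \<Rightarrow> 'v \<Rightarrow> 'v \<Rightarrow> real \<Rightarrow> real \<Rightarrow> real" where
  "marginal2 V g k l a b =
     Inf {g x | x. (\<forall>s\<in>V. 0 \<le> x s) \<and> x k = a \<and> x l = b}"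

text \<open>Oriented parameters: traversing stored edge (j,i) as (i,j) gives theta_ij = gamma_ji.\<close>
definition theta_or :: "('v \<times> 'v) set \<Rightarrow> ('v \<times> 'v \<Rightarrow> real) \<Rightarrow> ('v \<times> 'v \<Rightarrow> real) \<Rightarrow> 'v \<Rightarrow> 'v \<Rightarrow> real" where
  "theta_or E \<theta> \<gamma> i j = (if (i, j) \<in> E then \<theta> (i, j) else \<gamma> (j, i))"

definition gamma_or :: "('v \<times> 'v) set \<Rightarrow> ('v \<times> 'v \<Rightarrow> real) \<Rightarrow> ('v \<times> 'v \<Rightarrow> real) \<Rightarrow> 'v \<Rightarrow> 'v \<Rightarrow> real" where
  "gamma_or E \<theta> \<gamma> i j = (if (i, j) \<in> E then \<gamma> (i, j) else \<theta> (j, i))"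

end

theory Submission
  imports Defs
begin


lemma succ_nth: "successively P xs \<longleftrightarrow> (\<forall>n. Suc n < length xs \<longrightarrow> P (xs ! n) (xs ! Suc n))"
proof (induction xs)
  case Nil then show ?case by simp
next
  case (Cons a xs)
  show ?case
  proof (cases xs)
    case Nil then show ?thesis by simp
  next
    case (Cons b ys)
    have "(\<forall>n. Suc n < length (a # xs) \<longrightarrow> P ((a # xs) ! n) ((a # xs) ! Suc n))
       \<longleftrightarrow> P a b \<and> (\<forall>n. Suc n < length xs \<longrightarrow> P (xs ! n) (xs ! Suc n))"
    proof
      assume H: "\<forall>n. Suc n < length (a # xs) \<longrightarrow> P ((a # xs) ! n) ((a # xs) ! Suc n)"
      have "P a b" using H[rule_format, of 0] Cons by simp
      moreover have "\<forall>n. Suc n < length xs \<longrightarrow> P (xs ! n) (xs ! Suc n)"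
      proof (intro allI impI)
        fix n assume "Suc n < length xs"
        then show "P (xs ! n) (xs ! Suc n)" using H[rule_format, of "Suc n"] by simp
      qed
      ultimately show "P a b \<and> (\<forall>n. Suc n < length xs \<longrightarrow> P (xs ! n) (xs ! Suc n))" by blast
    next
      assume H: "P a b \<and> (\<forall>n. Suc n < length xs \<longrightarrow> P (xs ! n) (xs ! Suc n))"
      show "\<forall>n. Suc n < length (a # xs) \<longrightarrow> P ((a # xs) ! n) ((a # xs) ! Suc n)"
      proof (intro allI impI)
        fix n assume n: "Suc n < length (a # xs)"
        show "P ((a # xs) ! n) ((a # xs) ! Suc n)"
        proof (cases n)
          case 0 then show ?thesis using H Cons by simp
        next
          case (Suc m) then show ?thesis using H n by simp
        qed
      qed
    qed
    then show ?thesis using Cons.IH Cons by simp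
  qed
qed

lemma adj_sym: "adj E a b \<longleftrightarrow> adj E b a" unfolding adj_def by auto

lemma adj_mono: "E' \<subseteq> E \<Longrightarrow> adj E' a b \<Longrightarrow> adj E a b" unfolding adj_def by auto

lemma walk_succ: "walk E ps u v \<longleftrightarrow> ps \<noteq> [] \<and> hd ps = u \<and> last ps = v \<and> successively (adj E) ps"
  unfolding walk_def succ_nth by auto

lemma acyclic_succ: "acyclic_graph E \<longleftrightarrow> \<not> (\<exists>ps. length ps \<ge> 3 \<and> distinct ps \<and>
      successively (adj E) ps \<and> adj E (last ps) (hd ps))"
  unfolding acyclic_graph_def succ_nth by auto

lemma walk_distinct:
  "walk E ps u v \<Longrightarrow> \<exists>qs. walk E qs u v \<and> distinct qs \<and> set qs \<subseteq> set ps"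
proof (induction "length ps" arbitrary: ps rule: less_induct)
  case less
  show ?case
  proof (cases "distinct ps")
    case True then show ?thesis using less.prems by blast
  next
    case False
    then obtain xs ys zs y where ps: "ps = xs@[y]@ys@[y]@zs" using not_distinct_decomp by blast
    let ?qs = "xs @ y # zs"
    have s: "successively (adj E) (xs @ (y # ys) @ (y # zs))" using less.prems unfolding walk_succ ps by simp
    have "successively (adj E) xs" "xs \<noteq> [] \<longrightarrow> adj E (last xs) y"
      using s unfolding successively_append_iff by auto
    moreover have "successively (adj E) (y # zs)"
      using s unfolding successively_append_iff by auto
    ultimately have "successively (adj E) ?qs" unfolding successively_append_iff by auto
    moreover have "hd ?qs = u" "last ?qs = v" using less.prems unfolding walk_succ ps
      by (auto simp: hd_append last_append)
    ultimately have "walk E ?qs u v" unfolding walk_succ by simp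
    moreover have "length ?qs < length ps" using ps by simp
    ultimately obtain rs where rs: "walk E rs u v" "distinct rs" "set rs \<subseteq> set ?qs"
      using less.hyps by meson
    have "set ?qs \<subseteq> set ps" using ps by auto
    then show ?thesis using rs by blast
  qed
qed

lemma successively_rev_adj: "successively (adj E) (rev ps) \<longleftrightarrow> successively (adj E) ps"
  by (simp add: adj_sym[of E])


lemma successively_drop: "successively P xs \<Longrightarrow> successively P (drop i xs)"
proof -
  assume "successively P xs"
  then have "successively P (take i xs @ drop i xs)" by simp
  then show ?thesis unfolding successively_append_iff by blast
qed

lemma leaf_exists:
  assumes fin: "finite V" and ne: "V \<noteq> {}" and EV: "E \<subseteq> V \<times> V"
    and irr: "\<forall>i. (i, i) \<notin> E" and acyc: "acyclic_graph E"
  shows "\<exists>v\<in>V. \<forall>u u'. adj E v u \<longrightarrow> adj E v u' \<longrightarrow> u = u'"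
proof -
  define S where "S = {ps. ps \<noteq> [] \<and> distinct ps \<and> set ps \<subseteq> V \<and> successively (adj E) ps}"
  have finS: "finite S"
    by (rule finite_subset[OF _ finite_subset_distinct[OF fin]]) (auto simp: S_def)
  obtain v0 where v0: "v0 \<in> V" using ne by blast
  have "[v0] \<in> S" using v0 by (simp add: S_def)
  then have neS: "length ` S \<noteq> {}" by blast
  define mx where "mx = Max (length ` S)"
  obtain ps where psS: "ps \<in> S" and psl: "length ps = mx"
    using Max_in[OF finite_imageI[OF finS] neS] unfolding mx_def by auto
  have maxl: "length qs \<le> length ps" if "qs \<in> S" for qs
    using Max_ge[OF finite_imageI[OF finS]] that psl unfolding mx_def by auto
  have ps: "ps \<noteq> []" "distinct ps" "set ps \<subseteq> V" "successively (adj E) ps"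
    using psS by (auto simp: S_def)
  define w where "w = last ps"
  have wV: "w \<in> V" using ps unfolding w_def by auto
  have key: "length ps \<ge> 2 \<and> u = ps ! (length ps - 2)" if au: "adj E w u" for u
  proof -
    have uV: "u \<in> V" using au EV unfolding adj_def by auto
    have uin: "u \<in> set ps"
    proof (rule ccontr)
      assume nu: "u \<notin> set ps"
      have "successively (adj E) (ps @ [u])"
        using ps au unfolding successively_append_iff w_def by auto
      then have "ps @ [u] \<in> S" using ps nu uV by (auto simp: S_def)
      from maxl[OF this] show False by simp
    qed
    then obtain i where i: "i < length ps" "ps ! i = u" by (auto simp: in_set_conv_nth)
    have wl: "w = ps ! (length ps - 1)" using ps unfolding w_def by (simp add: last_conv_nth)
    have "u \<noteq> w" using au irr unfolding adj_def by auto
    then have i1: "i \<noteq> length ps - 1" using wl i by auto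
    have "\<not> i < length ps - 2"
    proof
      assume ilt: "i < length ps - 2"
      let ?cs = "drop i ps"
      have "length ?cs \<ge> 3" using ilt by simp
      moreover have "distinct ?cs" using ps by simp
      moreover have "successively (adj E) ?cs" using ps successively_drop by blast
      moreover have "last ?cs = w" using ps i unfolding w_def by (simp add: last_drop)
      moreover have "hd ?cs = u" using i by (simp add: hd_drop_conv_nth)
      ultimately show False using acyc au unfolding acyclic_succ by blast
    qed
    then have "i = length ps - 2" using i i1 by linarith
    then show ?thesis using i i1 by auto
  qed
  show ?thesis
  proof (intro bexI[OF _ wV] allI impI)
    fix u u' assume "adj E w u" "adj E w u'"
    then show "u = u'" using key by metis
  qed
qed




definition FE :: "'v set \<Rightarrow> ('v \<times> 'v) set \<Rightarrow> ('v \<Rightarrow> real) \<Rightarrow> real" where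
  "FE V E x = (\<Sum>v\<in>V. x v) - (\<Sum>(i, j)\<in>E. min (x i) (x j))"

fun fp :: "('v \<Rightarrow> real) \<Rightarrow> 'v list \<Rightarrow> real" where
  "fp x [] = 0"
| "fp x [a] = x a"
| "fp x (a # b # r) = x a - min (x a) (x b) + fp x (b # r)"

definition onpath :: "'v list \<Rightarrow> 'v \<Rightarrow> 'v \<Rightarrow> bool" where
  "onpath P i j \<longleftrightarrow> (\<exists>n. Suc n < length P \<and> ((i = P ! n \<and> j = P ! Suc n) \<or> (j = P ! n \<and> i = P ! Suc n)))"

lemma fp_snoc: "P \<noteq> [] \<Longrightarrow> fp x (P @ [c]) = fp x P + x c - min (x (last P)) (x c)"
proof (induction P)
  case Nil then show ?case by simp
next
  case (Cons a P)
  show ?case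
  proof (cases P)
    case Nil then show ?thesis by simp
  next
    case (Cons b r)
    then show ?thesis using Cons.IH by simp
  qed
qed

lemma fp_rev: "fp x (rev P) = fp x P"
proof (induction P)
  case Nil then show ?case by simp
next
  case (Cons a P)
  show ?case
  proof (cases P)
    case Nil then show ?thesis by simp
  next
    case (Cons b r)
    have "fp x (rev (a # P)) = fp x (rev P @ [a])" by simp
    also have "\<dots> = fp x (rev P) + x a - min (x (last (rev P))) (x a)"
      using Cons by (intro fp_snoc) simp
    also have "\<dots> = fp x (a # P)" using Cons.IH Cons by (simp add: min.commute)
    finally show ?thesis .
  qed
qed

lemma onpath_single[simp]: "\<not> onpath [a] i j" "\<not> onpath [] i j"
  unfolding onpath_def by auto

lemma onpath_Cons2: "onpath (a # b # r) i j \<longleftrightarrow> ((i = a \<and> j = b) \<or> (j = a \<and> i = b)) \<or> onpath (b # r) i j"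
proof
  assume "onpath (a # b # r) i j"
  then obtain n where n: "Suc n < length (a # b # r)"
    "(i = (a # b # r) ! n \<and> j = (a # b # r) ! Suc n) \<or> (j = (a # b # r) ! n \<and> i = (a # b # r) ! Suc n)"
    unfolding onpath_def by blast
  show "((i = a \<and> j = b) \<or> (j = a \<and> i = b)) \<or> onpath (b # r) i j"
  proof (cases n)
    case 0 then show ?thesis using n by simp
  next
    case (Suc m) then show ?thesis using n unfolding onpath_def by (intro disjI2 exI[of _ m]) auto
  qed
next
  assume "((i = a \<and> j = b) \<or> (j = a \<and> i = b)) \<or> onpath (b # r) i j"
  then show "onpath (a # b # r) i j"
  proof
    assume "(i = a \<and> j = b) \<or> (j = a \<and> i = b)"
    then show ?thesis unfolding onpath_def by (intro exI[of _ 0]) auto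
  next
    assume "onpath (b # r) i j"
    then obtain n where n: "Suc n < length (b # r)"
      "(i = (b # r) ! n \<and> j = (b # r) ! Suc n) \<or> (j = (b # r) ! n \<and> i = (b # r) ! Suc n)"
      unfolding onpath_def by blast
    then show ?thesis unfolding onpath_def by (intro exI[of _ "Suc n"]) auto
  qed
qed

lemma onpath_rev1: "onpath P i j \<Longrightarrow> onpath (rev P) i j"
proof -
  assume "onpath P i j"
  then obtain n where n: "Suc n < length P"
    "(i = P ! n \<and> j = P ! Suc n) \<or> (j = P ! n \<and> i = P ! Suc n)"
    unfolding onpath_def by blast
  define m where "m = length P - 2 - n"
  have m: "Suc m < length (rev P)" using n unfolding m_def by simp
  have "rev P ! m = P ! Suc n" using n unfolding m_def by (simp add: rev_nth)
  moreover have "rev P ! Suc m = P ! n" using n unfolding m_def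
    by (simp add: rev_nth Suc_diff_Suc numeral_2_eq_2)
  ultimately show ?thesis using n m unfolding onpath_def by (intro exI[of _ m]) auto
qed

lemma onpath_rev: "onpath (rev P) i j \<longleftrightarrow> onpath P i j"
  using onpath_rev1[of P] onpath_rev1[of "rev P"] by auto

lemma onpath_set: "onpath P i j \<Longrightarrow> i \<in> set P \<and> j \<in> set P"
  unfolding onpath_def by auto

lemma mid_not_leaf:
  assumes "distinct qs" "successively (adj E) qs" "v \<in> set qs"
    and nb: "\<forall>u'. adj E v u' \<longrightarrow> u' = u"
  shows "v = hd qs \<or> v = last qs"
proof (rule ccontr)
  assume c: "\<not> (v = hd qs \<or> v = last qs)"
  obtain i where i: "i < length qs" "qs ! i = v" using assms(3) by (auto simp: in_set_conv_nth)
  have "qs \<noteq> []" using assms(3) by auto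
  then have i0: "i \<noteq> 0" using c i by (metis hd_conv_nth)
  have il: "i \<noteq> length qs - 1" using c i \<open>qs \<noteq> []\<close> by (metis last_conv_nth)
  have s: "\<forall>n. Suc n < length qs \<longrightarrow> adj E (qs ! n) (qs ! Suc n)" using assms(2) succ_nth by blast
  have "adj E (qs ! (i - 1)) (qs ! i)" using s[rule_format, of "i - 1"] i i0 by simp
  then have a1: "qs ! (i - 1) = u" using nb i adj_sym by metis
  have "adj E (qs ! i) (qs ! Suc i)" using s[rule_format, of i] i il by simp
  then have a2: "qs ! Suc i = u" using nb i by metis
  have "i - 1 \<noteq> Suc i" by simp
  moreover have "Suc i < length qs" using i il by simp
  moreover have "i - 1 < length qs" using i by simp
  ultimately have "qs ! (i - 1) \<noteq> qs ! Suc i" using assms(1) nth_eq_iff_index_eq by blast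
  then show False using a1 a2 by simp
qed




lemma tree_main:
  assumes "is_tree V E" "P \<noteq> []" "distinct P" "set P \<subseteq> V" "successively (adj E) P"
  shows "fp x P \<le> FE V E x \<and> ((\<forall>i j. (i, j) \<in> E \<longrightarrow> \<not> onpath P i j \<longrightarrow> x i = x j) \<longrightarrow> FE V E x = fp x P)"
  using assms
proof (induction "card V" arbitrary: V E P rule: less_induct)
  case less
  have tr: "is_tree V E" by fact
  have fin: "finite V" and neV: "V \<noteq> {}" and EV: "E \<subseteq> V \<times> V" and irr: "\<forall>i. (i, i) \<notin> E"
    and asym: "\<forall>i j. (i, j) \<in> E \<longrightarrow> (j, i) \<notin> E" and conn: "connected_graph V E"
    and acyc: "acyclic_graph E"
    using tr unfolding is_tree_def is_graph_def by auto
  have finE: "finite E" using EV fin by (meson finite_SigmaI finite_subset)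
  show ?case
  proof (cases "card V \<le> 1")
    case True
    have "card V \<noteq> 0" using neV fin by simp
    then have "card V = 1" using True by linarith
    then obtain v where V1: "V = {v}" by (rule card_1_singletonE)
    have E0: "E = {}" using EV irr V1 by auto
    have "length P = card (set P)" using less.prems(3) by (simp add: distinct_card)
    also have "\<dots> \<le> card V" using less.prems(4) fin by (rule card_mono[rotated])
    also have "\<dots> = 1" using V1 by simp
    finally have "length P \<le> 1" .
    then have P1: "P = [v]" using less.prems(2) less.prems(4) V1
      by (cases P) auto
    show ?thesis unfolding P1 E0 V1 FE_def by simp
  next
    case False
    obtain v where vV: "v \<in> V" and leaf: "\<forall>u u'. adj E v u \<longrightarrow> adj E v u' \<longrightarrow> u = u'"
      using leaf_exists[OF fin neV EV irr acyc] by blast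
    obtain w where wV: "w \<in> V" and wv: "w \<noteq> v"
    proof -
      have "\<not> V \<subseteq> {v}"
      proof
        assume "V \<subseteq> {v}"
        then have "card V \<le> card {v}" by (intro card_mono) auto
        then show False using False by simp
      qed
      then show ?thesis using that by blast
    qed
    obtain ps where ps: "walk E ps v w" using conn vV wV unfolding connected_graph_def by blast
    have "Suc 0 < length ps"
    proof (rule ccontr)
      assume "\<not> Suc 0 < length ps"
      then have "length ps = 1" using ps unfolding walk_def by (cases ps) auto
      then show False using ps wv unfolding walk_def by (cases ps) auto
    qed
    then have "adj E (ps ! 0) (ps ! Suc 0)" using ps unfolding walk_def by blast
    moreover have "ps ! 0 = v" using ps unfolding walk_def by (metis hd_conv_nth)
    ultimately obtain u where avu: "adj E v u" by auto
    have nb: "\<forall>u'. adj E v u' \<longrightarrow> u' = u" using leaf avu by blast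
    have uV: "u \<in> V" using avu EV unfolding adj_def by auto
    have uv: "u \<noteq> v" using avu irr unfolding adj_def by auto
    define V' where "V' = V - {v}"
    define E' where "E' = {e \<in> E. fst e \<noteq> v \<and> snd e \<noteq> v}"
    define e0 where "e0 = (if (v, u) \<in> E then (v, u) else (u, v))"
    have e0E: "e0 \<in> E" using avu unfolding e0_def adj_def by auto
    have e0E': "e0 \<notin> E'" unfolding E'_def e0_def by auto
    have Eins: "E = insert e0 E'"
    proof
      show "insert e0 E' \<subseteq> E" using e0E unfolding E'_def by auto
      show "E \<subseteq> insert e0 E'"
      proof
        fix e assume eE: "e \<in> E"
        obtain i j where e: "e = (i, j)" by (cases e)
        show "e \<in> insert e0 E'"
        proof (cases "i = v \<or> j = v")
          case True
          then show ?thesis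
          proof
            assume "i = v"
            then have "adj E v j" using eE e unfolding adj_def by auto
            then have "j = u" using nb by blast
            then show ?thesis using eE e \<open>i = v\<close> unfolding e0_def by auto
          next
            assume "j = v"
            then have "adj E v i" using eE e unfolding adj_def by auto
            then have "i = u" using nb by blast
            then show ?thesis using eE e \<open>j = v\<close> asym unfolding e0_def by auto
          qed
        next
          case False then show ?thesis using eE e unfolding E'_def by auto
        qed
      qed
    qed
    have finE': "finite E'" using finE unfolding E'_def by auto
    have mine0: "(case e0 of (i, j) \<Rightarrow> min (x i) (x j)) = min (x v) (x u)"
      unfolding e0_def by (auto simp: min.commute)
    have FEdec: "FE V E x = FE V' E' x + (x v - min (x v) (x u))"
    proof -
      have "(\<Sum>(i, j)\<in>E. min (x i) (x j)) = min (x v) (x u) + (\<Sum>(i, j)\<in>E'. min (x i) (x j))"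
        using Eins sum.insert[OF finE' e0E', of "\<lambda>(i, j). min (x i) (x j)"] mine0 by simp
      moreover have "(\<Sum>v\<in>V. x v) = x v + (\<Sum>v\<in>V'. x v)"
        unfolding V'_def using sum.remove[OF fin vV] by simp
      ultimately show ?thesis unfolding FE_def by simp
    qed
    have adjE': "adj E' a b" if "adj E a b" "a \<noteq> v" "b \<noteq> v" for a b
      using that unfolding adj_def E'_def by auto
    have E'E: "E' \<subseteq> E" unfolding E'_def by auto
    have tr': "is_tree V' E'"
    proof -
      have "V' \<noteq> {}" using uV uv unfolding V'_def by auto
      moreover have "is_graph V' E'" using fin EV irr asym unfolding is_graph_def V'_def E'_def by auto
      moreover have "acyclic_graph E'"
        unfolding acyclic_succ
      proof
        assume "\<exists>ps. 3 \<le> length ps \<and> distinct ps \<and> successively (adj E') ps \<and> adj E' (last ps) (hd ps)"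
        then obtain ps where ps: "3 \<le> length ps" "distinct ps" "successively (adj E') ps" "adj E' (last ps) (hd ps)"
          by blast
        have "successively (adj E) ps" using successively_mono[OF ps(3)] adj_mono[OF E'E] by blast
        moreover have "adj E (last ps) (hd ps)" using ps(4) adj_mono[OF E'E] by blast
        ultimately show False using acyc ps(1,2) unfolding acyclic_succ by blast
      qed
      moreover have "connected_graph V' E'"
        unfolding connected_graph_def
      proof (intro ballI)
        fix p q assume p: "p \<in> V'" and q: "q \<in> V'"
        obtain ps where "walk E ps p q" using conn p q unfolding connected_graph_def V'_def by blast
        then obtain qs where qs: "walk E qs p q" "distinct qs" using walk_distinct[of E ps p q] by blast
        have "v \<notin> set qs"
        proof
          assume "v \<in> set qs"
          then have "v = hd qs \<or> v = last qs" using mid_not_leaf[OF qs(2) _ _ nb] qs(1) unfolding walk_succ by blast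
          then show False using qs(1) p q unfolding walk_succ V'_def by auto
        qed
        then have "successively (adj E') qs"
          using qs(1) unfolding walk_succ by (metis adjE' successively_mono)
        then show "\<exists>ps. walk E' ps p q" using qs(1) unfolding walk_succ by blast
      qed
      ultimately show ?thesis unfolding is_tree_def by blast
    qed
    have cardV': "card V' < card V" unfolding V'_def using fin vV by (meson card_Diff1_less)
    note IH = less.hyps[OF cardV' tr']
    have inner: "fp x Q \<le> FE V E x \<and> ((\<forall>i j. (i, j) \<in> E \<longrightarrow> \<not> onpath Q i j \<longrightarrow> x i = x j) \<longrightarrow> FE V E x = fp x Q)"
      if Q: "Q \<noteq> []" "distinct Q" "set Q \<subseteq> V" "successively (adj E) Q" and hv: "v \<notin> set Q \<or> hd Q = v" for Q
    proof (cases "v \<in> set Q")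
      case False
      have sQ: "successively (adj E') Q" using Q(4) False by (metis adjE' successively_mono)
      have QV': "set Q \<subseteq> V'" using Q(3) False unfolding V'_def by auto
      note ih = IH[OF Q(1) Q(2) QV' sQ]
      have "x v - min (x v) (x u) \<ge> 0" by simp
      then have le: "fp x Q \<le> FE V E x" using ih FEdec by linarith
      moreover have "FE V E x = fp x Q" if cond: "\<forall>i j. (i, j) \<in> E \<longrightarrow> \<not> onpath Q i j \<longrightarrow> x i = x j"
      proof -
        have c': "\<forall>i j. (i, j) \<in> E' \<longrightarrow> \<not> onpath Q i j \<longrightarrow> x i = x j" using cond E'E by blast
        have "\<not> onpath Q (fst e0) (snd e0)" using onpath_set[of Q "fst e0" "snd e0"] False unfolding e0_def by (auto split: if_splits)
        then have "x (fst e0) = x (snd e0)" using cond e0E by (metis prod.collapse)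
        then have "x v = x u" unfolding e0_def by (auto split: if_splits)
        then show ?thesis using ih c' FEdec by simp
      qed
      ultimately show ?thesis by blast
    next
      case True
      then have hQ: "hd Q = v" using hv by blast
      show ?thesis
      proof (cases "tl Q")
        case Nil
        then have Qv: "Q = [v]" using Q(1) hQ by (cases Q) auto
        note ih = IH[of "[u]"]
        have ih': "fp x [u] \<le> FE V' E' x \<and>
          ((\<forall>i j. (i, j) \<in> E' \<longrightarrow> \<not> onpath [u] i j \<longrightarrow> x i = x j) \<longrightarrow> FE V' E' x = fp x [u])"
          using uV uv by (intro ih) (auto simp: V'_def)
        have le: "fp x Q \<le> FE V E x" using ih' FEdec Qv by (simp add: min_def split: if_splits)
        moreover have "FE V E x = fp x Q" if cond: "\<forall>i j. (i, j) \<in> E \<longrightarrow> \<not> onpath Q i j \<longrightarrow> x i = x j"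
        proof -
          have c': "\<forall>i j. (i, j) \<in> E' \<longrightarrow> \<not> onpath [u] i j \<longrightarrow> x i = x j" using cond E'E Qv by auto
          have "x (fst e0) = x (snd e0)" using cond e0E Qv by (metis prod.collapse onpath_single(1))
          then have "x v = x u" unfolding e0_def by (auto split: if_splits)
          then show ?thesis using ih' c' FEdec Qv by simp
        qed
        ultimately show ?thesis by blast
      next
        case (Cons w' r)
        then have Qf: "Q = v # w' # r" using Q(1) hQ by (cases Q) auto
        have "adj E v w'" using Q(4) Qf by simp
        then have w'u: "w' = u" using nb by blast
        let ?Q' = "u # r"
        have Q'1: "distinct ?Q'" using Q(2) Qf w'u by simp
        have vQ': "v \<notin> set ?Q'" using Q(2) Qf w'u by auto
        have sQ': "successively (adj E') ?Q'"
          using Q(4) Qf w'u vQ' by (metis adjE' successively.simps(3) successively_mono)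
        have QV': "set ?Q' \<subseteq> V'" using Q(3) Qf w'u vQ' unfolding V'_def by auto
        note ih = IH[OF _ Q'1 QV' sQ']
        have fpQ: "fp x Q = x v - min (x v) (x u) + fp x ?Q'" using Qf w'u by simp
        have le: "fp x Q \<le> FE V E x" using ih FEdec fpQ by simp
        moreover have "FE V E x = fp x Q" if cond: "\<forall>i j. (i, j) \<in> E \<longrightarrow> \<not> onpath Q i j \<longrightarrow> x i = x j"
        proof -
          have c': "\<forall>i j. (i, j) \<in> E' \<longrightarrow> \<not> onpath ?Q' i j \<longrightarrow> x i = x j"
          proof (intro allI impI)
            fix i j assume ij: "(i, j) \<in> E'" "\<not> onpath ?Q' i j"
            have "i \<noteq> v" "j \<noteq> v" using ij unfolding E'_def by auto
            then have "\<not> onpath Q i j" using ij(2) Qf w'u onpath_Cons2 by metis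
            then show "x i = x j" using cond ij(1) E'E by blast
          qed
          then show ?thesis using ih FEdec fpQ by simp
        qed
        ultimately show ?thesis by blast
      qed
    qed
    show ?thesis
    proof (cases "v \<notin> set P \<or> hd P = v")
      case True then show ?thesis using inner less.prems by blast
    next
      case False
      then have "v = last P" using mid_not_leaf[OF less.prems(3) less.prems(5) _ nb] by blast
      then have "hd (rev P) = v" using less.prems(2) by (simp add: hd_rev)
      moreover have "rev P \<noteq> []" "distinct (rev P)" "set (rev P) \<subseteq> V"
        using less.prems by auto
      moreover have "successively (adj E) (rev P)"
        using less.prems(5) successively_rev_adj[of E P] by blast
      ultimately have "fp x (rev P) \<le> FE V E x \<and> ((\<forall>i j. (i, j) \<in> E \<longrightarrow> \<not> onpath (rev P) i j \<longrightarrow> x i = x j) \<longrightarrow> FE V E x = fp x (rev P))"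
        using inner by blast
      then show ?thesis by (simp add: fp_rev onpath_rev)
    qed
  qed
qed




definition pen :: "real \<Rightarrow> real \<Rightarrow> real \<Rightarrow> real \<Rightarrow> real" where
  "pen t g a b = (1 / t - 1) * max (a - b) 0 + (1 / g - 1) * max (b - a) 0"

lemma pen_swap: "pen t g a b = pen g t b a" unfolding pen_def by simp

lemma pen_eq0: "pen t g a a = 0" unfolding pen_def by simp

lemma pen_nonneg: "0 < t \<Longrightarrow> t \<le> 1 \<Longrightarrow> 0 < g \<Longrightarrow> g \<le> 1 \<Longrightarrow> 0 \<le> pen t g a b"
  unfolding pen_def by (intro add_nonneg_nonneg mult_nonneg_nonneg) auto

lemma edge_gauge_dec: "edge_gauge t g a b - a - b = pen t g a b - min a b"
proof (cases "a \<le> b")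
  case True
  then show ?thesis unfolding edge_gauge_def pen_def
    by (simp add: min_def max_def algebra_simps diff_divide_distrib)
next
  case False
  then show ?thesis unfolding edge_gauge_def pen_def
    by (simp add: min_def max_def algebra_simps diff_divide_distrib)
qed

lemma tree_gauge_dec: "tree_gauge V E \<theta> \<gamma> x = FE V E x + (\<Sum>(i, j)\<in>E. pen (\<theta> (i, j)) (\<gamma> (i, j)) (x i) (x j))"
proof -
  have "(\<Sum>(i, j)\<in>E. edge_gauge (\<theta> (i, j)) (\<gamma> (i, j)) (x i) (x j) - x i - x j)
      = (\<Sum>(i, j)\<in>E. pen (\<theta> (i, j)) (\<gamma> (i, j)) (x i) (x j) - min (x i) (x j))"
    by (intro sum.cong) (auto simp: edge_gauge_dec)
  also have "\<dots> = (\<Sum>(i, j)\<in>E. pen (\<theta> (i, j)) (\<gamma> (i, j)) (x i) (x j)) - (\<Sum>(i, j)\<in>E. min (x i) (x j))"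
    by (simp add: case_prod_beta sum_subtractf)
  finally show ?thesis unfolding tree_gauge_def FE_def by simp
qed

definition penor :: "('v \<times> 'v) set \<Rightarrow> ('v \<times> 'v \<Rightarrow> real) \<Rightarrow> ('v \<times> 'v \<Rightarrow> real) \<Rightarrow> ('v \<Rightarrow> real) \<Rightarrow> 'v \<Rightarrow> 'v \<Rightarrow> real" where
  "penor E \<theta> \<gamma> x i j = pen (theta_or E \<theta> \<gamma> i j) (gamma_or E \<theta> \<gamma> i j) (x i) (x j)"

definition oe :: "('v \<times> 'v) set \<Rightarrow> 'v \<Rightarrow> 'v \<Rightarrow> 'v \<times> 'v" where
  "oe E i j = (if (i, j) \<in> E then (i, j) else (j, i))"

lemma oe_pen: "(case oe E i j of (p, q) \<Rightarrow> pen (\<theta> (p, q)) (\<gamma> (p, q)) (x p) (x q)) = penor E \<theta> \<gamma> x i j"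
  unfolding oe_def penor_def theta_or_def gamma_or_def by (auto simp: pen_swap)

lemma oe_in: "adj E i j \<Longrightarrow> oe E i j \<in> E"
  unfolding oe_def adj_def by auto

definition PS :: "('v \<times> 'v) set \<Rightarrow> ('v \<times> 'v \<Rightarrow> real) \<Rightarrow> ('v \<times> 'v \<Rightarrow> real) \<Rightarrow> ('v \<Rightarrow> real) \<Rightarrow> 'v list \<Rightarrow> real" where
  "PS E \<theta> \<gamma> x P = (\<Sum>n<length P - 1. penor E \<theta> \<gamma> x (P ! n) (P ! Suc n))"

lemma PS_simps: "PS E \<theta> \<gamma> x [a] = 0" "PS E \<theta> \<gamma> x (a # b # r) = penor E \<theta> \<gamma> x a b + PS E \<theta> \<gamma> x (b # r)"
  unfolding PS_def by (simp_all add: sum.lessThan_Suc_shift del: sum.lessThan_Suc)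

lemma fp_sum: "P \<noteq> [] \<Longrightarrow> fp x P = x (last P) + (\<Sum>n<length P - 1. max (x (P ! n) - x (P ! Suc n)) 0)"
proof (induction x P rule: fp.induct)
  case (3 x a b r)
  have "fp x (a # b # r) = x a - min (x a) (x b) + fp x (b # r)" by simp
  also have "\<dots> = max (x a - x b) 0 + (x (last (b # r)) + (\<Sum>n<length (b # r) - 1. max (x ((b # r) ! n) - x ((b # r) ! Suc n)) 0))"
    using 3 by (simp add: min_def max_def)
  also have "\<dots> = x (last (a # b # r)) + (\<Sum>n<length (a # b # r) - 1. max (x ((a # b # r) ! n) - x ((a # b # r) ! Suc n)) 0)"
    by (simp add: sum.lessThan_Suc_shift del: sum.lessThan_Suc)
  finally show ?case .
qed auto

lemma pen_sum_ge:
  assumes finE: "finite E" and nn: "\<forall>e\<in>E. 0 < \<theta> e \<and> \<theta> e \<le> 1 \<and> 0 < \<gamma> e \<and> \<gamma> e \<le> 1"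
    and P: "distinct P" "successively (adj E) P"
  shows "PS E \<theta> \<gamma> x P \<le> (\<Sum>(i, j)\<in>E. pen (\<theta> (i, j)) (\<gamma> (i, j)) (x i) (x j))"
proof -
  let ?I = "{..<length P - 1}"
  let ?f = "\<lambda>n. oe E (P ! n) (P ! Suc n)"
  have adjn: "adj E (P ! n) (P ! Suc n)" if "n \<in> ?I" for n
    using P(2) that unfolding succ_nth by auto
  have inj: "inj_on ?f ?I"
  proof
    fix n m assume n: "n \<in> ?I" and m: "m \<in> ?I" and eq: "?f n = ?f m"
    have ln: "n < length P" "Suc n < length P" "m < length P" "Suc m < length P" using n m by auto
    have "(P ! n = P ! m \<and> P ! Suc n = P ! Suc m) \<or> (P ! n = P ! Suc m \<and> P ! Suc n = P ! m)"
      using eq by (cases "(P ! n, P ! Suc n) \<in> E"; cases "(P ! m, P ! Suc m) \<in> E") (simp_all add: oe_def)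
    then show "n = m"
    proof
      assume "P ! n = P ! m \<and> P ! Suc n = P ! Suc m"
      then show ?thesis using P(1) ln nth_eq_iff_index_eq by blast
    next
      assume h: "P ! n = P ! Suc m \<and> P ! Suc n = P ! m"
      then have "n = Suc m" "Suc n = m" using P(1) ln nth_eq_iff_index_eq by blast+
      then show ?thesis by simp
    qed
  qed
  have sub: "?f ` ?I \<subseteq> E"
  proof (rule image_subsetI)
    fix n assume "n \<in> ?I"
    then show "?f n \<in> E" by (rule oe_in[OF adjn])
  qed
  have "PS E \<theta> \<gamma> x P = (\<Sum>n\<in>?I. (case ?f n of (p, q) \<Rightarrow> pen (\<theta> (p, q)) (\<gamma> (p, q)) (x p) (x q)))"
    unfolding PS_def by (simp add: oe_pen)
  also have "\<dots> = (\<Sum>e\<in>?f ` ?I. (case e of (p, q) \<Rightarrow> pen (\<theta> (p, q)) (\<gamma> (p, q)) (x p) (x q)))"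
    using sum.reindex[OF inj, of "\<lambda>e. case e of (p, q) \<Rightarrow> pen (\<theta> (p, q)) (\<gamma> (p, q)) (x p) (x q)"]
    by (simp add: o_def)
  also have "\<dots> \<le> (\<Sum>(i, j)\<in>E. pen (\<theta> (i, j)) (\<gamma> (i, j)) (x i) (x j))"
    using finE sub nn by (intro sum_mono2) (auto intro!: pen_nonneg)
  finally show ?thesis .
qed

definition phi :: "real \<Rightarrow> real \<Rightarrow> real \<Rightarrow> real" where
  "phi T G d = max d 0 / T + (1 / G - 1) * max (- d) 0"

lemma phi_subadd:
  assumes "0 < T" "0 < G" "G \<le> 1"
  shows "phi T G (d1 + d2) \<le> phi T G d1 + phi T G d2"
proof -
  have a: "max (d1 + d2) 0 / T \<le> max d1 0 / T + max d2 0 / T"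
    using assms by (simp add: add_divide_distrib[symmetric] divide_right_mono)
  have "1 / G \<ge> 1" using assms by simp
  then have b: "(1 / G - 1) * max (- (d1 + d2)) 0 \<le> (1 / G - 1) * max (- d1) 0 + (1 / G - 1) * max (- d2) 0"
    by (simp add: distrib_left[symmetric] mult_left_mono)
  show ?thesis unfolding phi_def using a b by linarith
qed

lemma edge_cost_ge:
  assumes "0 < t" "t \<le> T" "0 < g" "g \<le> G"
  shows "phi T G (a - b) \<le> max (a - b) 0 + pen t g a b"
proof -
  have "1 / T \<le> 1 / t" "1 / G \<le> 1 / g" using assms by (auto intro: divide_left_mono)
  then have "max (a - b) 0 / T \<le> max (a - b) 0 / t" "(1 / G - 1) * max (b - a) 0 \<le> (1 / g - 1) * max (b - a) 0"
    by (auto simp: divide_inverse intro!: mult_left_mono mult_right_mono)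
  moreover have "max (a - b) 0 + (1 / t - 1) * max (a - b) 0 = max (a - b) 0 / t"
    by (simp add: algebra_simps divide_inverse)
  ultimately show ?thesis unfolding phi_def pen_def by (simp add: max_def)
qed

lemma path_lower:
  assumes "0 < T" "0 < G" "G \<le> 1" "P \<noteq> []"
    and "successively (\<lambda>i j. 0 < theta_or E \<theta> \<gamma> i j \<and> theta_or E \<theta> \<gamma> i j \<le> T \<and>
             0 < gamma_or E \<theta> \<gamma> i j \<and> gamma_or E \<theta> \<gamma> i j \<le> G) P"
  shows "x (last P) + phi T G (x (hd P) - x (last P)) \<le> fp x P + PS E \<theta> \<gamma> x P"
  using assms(4,5)
proof (induction x P rule: fp.induct)
  case (2 x a)
  then show ?case by (simp add: PS_simps phi_def)
next
  case (3 x a b r)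
  have ih: "x (last (b # r)) + phi T G (x (hd (b # r)) - x (last (b # r))) \<le> fp x (b # r) + PS E \<theta> \<gamma> x (b # r)"
    using 3 by simp
  have e: "phi T G (x a - x b) \<le> max (x a - x b) 0 + penor E \<theta> \<gamma> x a b"
    using 3(3) unfolding penor_def by (intro edge_cost_ge) auto
  have s: "phi T G (x a - x (last (b # r))) \<le> phi T G (x a - x b) + phi T G (x b - x (last (b # r)))"
    using phi_subadd[OF assms(1-3), of "x a - x b" "x b - x (last (b # r))"] by simp
  have "x a - min (x a) (x b) = max (x a - x b) 0" by (simp add: min_def max_def)
  then show ?case using ih e s by (simp add: PS_simps)
qed auto




lemma rtrancl_walk:
  assumes "(p, q) \<in> {(a, b). adj F a b}\<^sup>*"
  shows "\<exists>ws. walk F ws p q"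
  using assms
proof (induction rule: rtrancl_induct)
  case base
  then show ?case by (intro exI[of _ "[p]"]) (simp add: walk_succ)
next
  case (step y z)
  then obtain ws where ws: "walk F ws p y" by blast
  have "successively (adj F) (ws @ [z])"
    using ws step(2) unfolding walk_succ successively_append_iff by auto
  then have "walk F (ws @ [z]) p z" using ws unfolding walk_succ by auto
  then show ?case by blast
qed

lemma cut_construction:
  assumes tree: "is_tree V E" and P: "distinct P" "successively (adj E) P"
    and m: "Suc m < length P"
  shows "\<exists>A. (\<forall>n. n \<le> m \<longrightarrow> P ! n \<in> A) \<and> (\<forall>n. m < n \<and> n < length P \<longrightarrow> P ! n \<notin> A) \<and>
     (\<forall>i j. (i, j) \<in> E \<longrightarrow> (i, j) \<noteq> (P ! m, P ! Suc m) \<longrightarrow> (i, j) \<noteq> (P ! Suc m, P ! m) \<longrightarrow> (i \<in> A \<longleftrightarrow> j \<in> A))"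
proof -
  have acyc: "acyclic_graph E" using tree unfolding is_tree_def by auto
  define c1 where "c1 = P ! m"
  define c2 where "c2 = P ! Suc m"
  define Ec where "Ec = E - {(c1, c2), (c2, c1)}"
  define R where "R = {(p, q). adj Ec p q}"
  define A where "A = {w. (c1, w) \<in> R\<^sup>*}"
  have EcE: "Ec \<subseteq> E" unfolding Ec_def by auto
  have Rsym: "(p, q) \<in> R \<longleftrightarrow> (q, p) \<in> R" for p q unfolding R_def using adj_sym[of Ec p q] by auto
  have Rconv: "R\<inverse> = R" using Rsym by auto
  have rsym: "(q, p) \<in> R\<^sup>*" if "(p, q) \<in> R\<^sup>*" for p q
    using rtrancl_converseI[OF that] Rconv by simp
  have adjP: "adj E (P ! i) (P ! Suc i)" if "Suc i < length P" for i
    using P(2) that unfolding succ_nth by blast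
  have F0: "(P ! i, P ! Suc i) \<in> R" if i: "Suc i < length P" "i \<noteq> m" for i
  proof -
    have "P ! i \<noteq> c1" using i m P(1) unfolding c1_def by (simp add: nth_eq_iff_index_eq)
    moreover have "P ! i \<noteq> c2 \<or> P ! Suc i \<noteq> c1"
    proof (cases "i = Suc m")
      case True
      then show ?thesis using i m P(1) unfolding c1_def by (simp add: nth_eq_iff_index_eq)
    next
      case False
      then show ?thesis using i m P(1) unfolding c2_def by (simp add: nth_eq_iff_index_eq)
    qed
    ultimately have "adj Ec (P ! i) (P ! Suc i)"
      using adjP[OF i(1)] unfolding adj_def Ec_def by auto
    then show ?thesis unfolding R_def by simp
  qed
  have F3: "(c1, c2) \<notin> R\<^sup>*"
  proof
    assume "(c1, c2) \<in> R\<^sup>*"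
    then obtain ws where "walk Ec ws c1 c2" using rtrancl_walk[of c1 c2 Ec] unfolding R_def by blast
    then obtain qs where qs: "walk Ec qs c1 c2" "distinct qs" using walk_distinct[of Ec ws c1 c2] by blast
    have c12: "c1 \<noteq> c2" using P(1) m unfolding c1_def c2_def by (simp add: nth_eq_iff_index_eq)
    have sq: "successively (adj Ec) qs" "qs \<noteq> []" "hd qs = c1" "last qs = c2"
      using qs(1) unfolding walk_succ by auto
    show False
    proof (cases "length qs \<ge> 3")
      case True
      have "successively (adj E) qs" using successively_mono[OF sq(1)] adj_mono[OF EcE] by blast
      moreover have "adj E (last qs) (hd qs)" using sq adjP[OF m] adj_sym unfolding c1_def c2_def by metis
      ultimately show False using acyc True qs(2) unfolding acyclic_succ by blast
    next
      case False
      have "length qs \<noteq> 1" using sq c12 by (cases qs) auto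
      moreover have "length qs \<noteq> 0" using sq(2) by simp
      ultimately have "length qs = 2" using False by linarith
      then obtain y z where "qs = [y, z]" by (cases qs rule: remdups_adj.cases) auto
      then have "adj Ec c1 c2" using sq by simp
      then show False unfolding adj_def Ec_def by auto
    qed
  qed
  have F4: "(c1, P ! (m - j)) \<in> R\<^sup>*" if "j \<le> m" for j
    using that
  proof (induction j)
    case 0 then show ?case unfolding c1_def by simp
  next
    case (Suc j)
    have "(P ! (m - Suc j), P ! Suc (m - Suc j)) \<in> R" using Suc.prems m by (intro F0) auto
    moreover have "Suc (m - Suc j) = m - j" using Suc.prems by simp
    ultimately have "(P ! (m - j), P ! (m - Suc j)) \<in> R" using Rsym by metis
    then show ?case using Suc by (meson Suc_leD rtrancl_into_rtrancl)
  qed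
  have F5: "(c2, P ! (Suc m + j)) \<in> R\<^sup>*" if "Suc m + j < length P" for j
    using that
  proof (induction j)
    case 0 then show ?case unfolding c2_def by simp
  next
    case (Suc j)
    have "(P ! (Suc m + j), P ! Suc (Suc m + j)) \<in> R" using Suc.prems by (intro F0) auto
    then show ?case using Suc by (metis Suc_lessD add_Suc_right rtrancl_into_rtrancl)
  qed
  show ?thesis
  proof (intro exI[of _ A] conjI allI impI)
    fix n assume "n \<le> m"
    then show "P ! n \<in> A" using F4[of "m - n"] unfolding A_def by simp
  next
    fix n assume n: "m < n \<and> n < length P"
    show "P ! n \<notin> A"
    proof
      assume "P ! n \<in> A"
      then have "(c1, P ! n) \<in> R\<^sup>*" unfolding A_def by simp
      moreover have "(c2, P ! n) \<in> R\<^sup>*" using F5[of "n - Suc m"] n by simp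
      then have "(P ! n, c2) \<in> R\<^sup>*" by (rule rsym)
      ultimately show False using F3 by (meson rtrancl_trans)
    qed
  next
    fix i j assume ij: "(i, j) \<in> E" "(i, j) \<noteq> (P ! m, P ! Suc m)" "(i, j) \<noteq> (P ! Suc m, P ! m)"
    then have "(i, j) \<in> Ec" unfolding Ec_def c1_def c2_def by auto
    then have "(i, j) \<in> R" "(j, i) \<in> R" unfolding R_def adj_def by auto
    then show "i \<in> A \<longleftrightarrow> j \<in> A" unfolding A_def mem_Collect_eq by (meson rtrancl_into_rtrancl)
  qed
qed


lemma C_form:
  assumes "0 < T" "0 < G"
  shows "b + phi T G (a - b) = a / T + b / G + (1 - 1 / T - 1 / G) * min a b"
proof (cases "a \<le> b")
  case True
  then show ?thesis using assms unfolding phi_def by (simp add: min_def max_def field_simps)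
next
  case False
  then show ?thesis using assms unfolding phi_def by (simp add: min_def max_def field_simps)
qed

theorem proposition9:
  fixes V :: "'v::linorder set" and E :: "('v \<times> 'v) set"
    and \<theta> \<gamma> :: "'v \<times> 'v \<Rightarrow> real"
  assumes tree: "is_tree V E"
    and par: "\<forall>e\<in>E. 0 < \<theta> e \<and> \<theta> e < 1 \<and> 0 < \<gamma> e \<and> \<gamma> e < 1"
    and kl: "k \<in> V" "l \<in> V" "k < l"
    and path: "simple_path E ps k l"
    and xs: "0 \<le> a" "0 \<le> b"
  shows "marginal2 V (tree_gauge V E \<theta> \<gamma>) k l a b =
    (let T = Max {theta_or E \<theta> \<gamma> (ps ! n) (ps ! Suc n) | n. Suc n < length ps};
         G = Max {gamma_or E \<theta> \<gamma> (ps ! n) (ps ! Suc n) | n. Suc n < length ps}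
     in a / T + b / G + (1 - 1 / T - 1 / G) * min a b)"
proof -
  define T where "T = Max {theta_or E \<theta> \<gamma> (ps ! n) (ps ! Suc n) | n. Suc n < length ps}"
  define G where "G = Max {gamma_or E \<theta> \<gamma> (ps ! n) (ps ! Suc n) | n. Suc n < length ps}"
  define C where "C = a / T + b / G + (1 - 1 / T - 1 / G) * min a b"
  have fin: "finite V" and EV: "E \<subseteq> V \<times> V" and asym: "\<forall>i j. (i, j) \<in> E \<longrightarrow> (j, i) \<notin> E"
    using tree unfolding is_tree_def is_graph_def by auto
  have finE: "finite E" using EV fin by (meson finite_SigmaI finite_subset)
  have ps: "ps \<noteq> []" "hd ps = k" "last ps = l" "successively (adj E) ps" "distinct ps"
    using path unfolding simple_path_def walk_succ by auto
  have adjP: "adj E (ps ! n) (ps ! Suc n)" if "Suc n < length ps" for n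
    using ps(4) that unfolding succ_nth by blast
  have len2: "Suc 0 < length ps"
  proof (rule ccontr)
    assume "\<not> Suc 0 < length ps"
    then have "length ps = 1" using ps(1) by (cases ps) auto
    then have "hd ps = last ps" by (cases ps) auto
    then show False using ps kl by simp
  qed
  have setV: "set ps \<subseteq> V"
  proof
    fix y assume "y \<in> set ps"
    then obtain i where i: "i < length ps" "ps ! i = y" by (auto simp: in_set_conv_nth)
    show "y \<in> V"
    proof (cases i)
      case 0 then show ?thesis using i ps kl by (metis hd_conv_nth)
    next
      case (Suc i')
      then have "adj E (ps ! i') (ps ! i)" using adjP[of i'] i by simp
      then show ?thesis using EV i unfolding adj_def by auto
    qed
  qed
  have or_in: "0 < theta_or E \<theta> \<gamma> (ps ! n) (ps ! Suc n) \<and> theta_or E \<theta> \<gamma> (ps ! n) (ps ! Suc n) < 1 \<and>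
      0 < gamma_or E \<theta> \<gamma> (ps ! n) (ps ! Suc n) \<and> gamma_or E \<theta> \<gamma> (ps ! n) (ps ! Suc n) < 1"
    if "Suc n < length ps" for n
    using adjP[OF that] par unfolding theta_or_def gamma_or_def adj_def by auto
  let ?I = "{..<length ps - 1}"
  have ThS: "{theta_or E \<theta> \<gamma> (ps ! n) (ps ! Suc n) | n. Suc n < length ps} = (\<lambda>n. theta_or E \<theta> \<gamma> (ps ! n) (ps ! Suc n)) ` ?I"
    by auto
  have GaS: "{gamma_or E \<theta> \<gamma> (ps ! n) (ps ! Suc n) | n. Suc n < length ps} = (\<lambda>n. gamma_or E \<theta> \<gamma> (ps ! n) (ps ! Suc n)) ` ?I"
    by auto
  have "0 \<in> ?I" using len2 by simp
  then have Ine: "?I \<noteq> {}" by blast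
  have Tge: "theta_or E \<theta> \<gamma> (ps ! n) (ps ! Suc n) \<le> T" if "Suc n < length ps" for n
    unfolding T_def ThS using that by (intro Max_ge) auto
  have Gge: "gamma_or E \<theta> \<gamma> (ps ! n) (ps ! Suc n) \<le> G" if "Suc n < length ps" for n
    unfolding G_def GaS using that by (intro Max_ge) auto
  have "T \<in> (\<lambda>n. theta_or E \<theta> \<gamma> (ps ! n) (ps ! Suc n)) ` ?I"
    unfolding T_def ThS using Ine by (intro Max_in) auto
  then obtain mT where mT0: "mT \<in> ?I" "T = theta_or E \<theta> \<gamma> (ps ! mT) (ps ! Suc mT)"
    by blast
  then have mT: "Suc mT < length ps" "theta_or E \<theta> \<gamma> (ps ! mT) (ps ! Suc mT) = T"
    by auto
  have "G \<in> (\<lambda>n. gamma_or E \<theta> \<gamma> (ps ! n) (ps ! Suc n)) ` ?I"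
    unfolding G_def GaS using Ine by (intro Max_in) auto
  then obtain mG where mG0: "mG \<in> ?I" "G = gamma_or E \<theta> \<gamma> (ps ! mG) (ps ! Suc mG)"
    by blast
  then have mG: "Suc mG < length ps" "gamma_or E \<theta> \<gamma> (ps ! mG) (ps ! Suc mG) = G"
    by auto
  have T01: "0 < T" "T < 1" using or_in[OF mT(1)] mT(2) by auto
  have G01: "0 < G" "G < 1" using or_in[OF mG(1)] mG(2) by auto
  have nn: "\<forall>e\<in>E. 0 < \<theta> e \<and> \<theta> e \<le> 1 \<and> 0 < \<gamma> e \<and> \<gamma> e \<le> 1" using par by auto
  have Cform: "b + phi T G (a - b) = C" unfolding C_def using C_form T01 G01 by simp
  have lower: "C \<le> tree_gauge V E \<theta> \<gamma> x" if x: "x k = a" "x l = b" for x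
  proof -
    have sc: "successively (\<lambda>i j. 0 < theta_or E \<theta> \<gamma> i j \<and> theta_or E \<theta> \<gamma> i j \<le> T \<and>
             0 < gamma_or E \<theta> \<gamma> i j \<and> gamma_or E \<theta> \<gamma> i j \<le> G) ps"
      unfolding succ_nth using or_in Tge Gge by auto
    have "x (last ps) + phi T G (x (hd ps) - x (last ps)) \<le> fp x ps + PS E \<theta> \<gamma> x ps"
      using path_lower[OF T01(1) G01(1) _ ps(1) sc] G01 by simp
    moreover have "fp x ps \<le> FE V E x" using tree_main[OF tree ps(1) ps(5) setV ps(4)] by blast
    moreover have "PS E \<theta> \<gamma> x ps \<le> (\<Sum>(i, j)\<in>E. pen (\<theta> (i, j)) (\<gamma> (i, j)) (x i) (x j))"
      using pen_sum_ge[OF finE nn ps(5) ps(4)] by blast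
    ultimately show ?thesis using Cform x ps(2,3) unfolding tree_gauge_dec by simp
  qed
  obtain m where m: "Suc m < length ps"
    and mval: "max (a - b) 0 + pen (theta_or E \<theta> \<gamma> (ps ! m) (ps ! Suc m)) (gamma_or E \<theta> \<gamma> (ps ! m) (ps ! Suc m)) a b
              = phi T G (a - b)"
  proof (cases "b \<le> a")
    case True
    have "max (a - b) 0 + pen T (gamma_or E \<theta> \<gamma> (ps ! mT) (ps ! Suc mT)) a b = phi T G (a - b)"
      using True T01 unfolding pen_def phi_def by (simp add: max_def field_simps)
    then show ?thesis using that mT by metis
  next
    case False
    have "max (a - b) 0 + pen (theta_or E \<theta> \<gamma> (ps ! mG) (ps ! Suc mG)) G a b = phi T G (a - b)"
      using False G01 unfolding pen_def phi_def by (simp add: max_def field_simps)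
    then show ?thesis using that mG by metis
  qed
  obtain A where A1: "\<forall>n. n \<le> m \<longrightarrow> ps ! n \<in> A" and A2: "\<forall>n. m < n \<and> n < length ps \<longrightarrow> ps ! n \<notin> A"
    and A3: "\<forall>i j. (i, j) \<in> E \<longrightarrow> (i, j) \<noteq> (ps ! m, ps ! Suc m) \<longrightarrow> (i, j) \<noteq> (ps ! Suc m, ps ! m) \<longrightarrow> (i \<in> A \<longleftrightarrow> j \<in> A)"
    using cut_construction[OF tree ps(5) ps(4) m] by blast
  define x0 where "x0 = (\<lambda>w. if w \<in> A then a else b)"
  have x0k: "x0 k = a" using A1 ps(1,2) unfolding x0_def by (metis hd_conv_nth le0)
  have x0l: "x0 l = b"
  proof -
    have "l = ps ! (length ps - 1)" using ps(1,3) by (simp add: last_conv_nth)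
    moreover have "m < length ps - 1" "length ps - 1 < length ps" using m by auto
    ultimately show ?thesis using A2 unfolding x0_def by auto
  qed
  have x0e: "x0 i = x0 j" if "(i, j) \<in> E" "(i, j) \<noteq> (ps ! m, ps ! Suc m)" "(i, j) \<noteq> (ps ! Suc m, ps ! m)" for i j
    using A3 that unfolding x0_def by auto
  have x0n: "x0 (ps ! n) = (if n \<le> m then a else b)" if "n < length ps" for n
    using A1 A2 that unfolding x0_def by auto
  have onm: "onpath ps (ps ! m) (ps ! Suc m)" "onpath ps (ps ! Suc m) (ps ! m)"
    unfolding onpath_def using m by blast+
  have FEeq: "FE V E x0 = fp x0 ps"
  proof -
    have "\<forall>i j. (i, j) \<in> E \<longrightarrow> \<not> onpath ps i j \<longrightarrow> x0 i = x0 j"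
    proof (intro allI impI)
      fix i j assume ij: "(i, j) \<in> E" "\<not> onpath ps i j"
      have "(i, j) \<noteq> (ps ! m, ps ! Suc m)" using ij(2) onm(1) by auto
      moreover have "(i, j) \<noteq> (ps ! Suc m, ps ! m)" using ij(2) onm(2) by auto
      ultimately show "x0 i = x0 j" using x0e ij(1) by blast
    qed
    then show ?thesis using tree_main[OF tree ps(1) ps(5) setV ps(4)] by blast
  qed
  have fpv: "fp x0 ps = b + max (a - b) 0"
  proof -
    have "(\<Sum>n<length ps - 1. max (x0 (ps ! n) - x0 (ps ! Suc n)) 0)
        = (\<Sum>n<length ps - 1. if n = m then max (a - b) 0 else 0)"
    proof (intro sum.cong refl)
      fix n assume n: "n \<in> ?I"
      then have "n < length ps" "Suc n < length ps" by auto
      then show "max (x0 (ps ! n) - x0 (ps ! Suc n)) 0 = (if n = m then max (a - b) 0 else 0)"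
        using x0n by auto
    qed
    also have "\<dots> = max (a - b) 0" using m by (simp add: sum.delta less_diff_conv)
    finally show ?thesis using fp_sum[OF ps(1), of x0] x0l ps(3) by simp
  qed
  have penv: "(\<Sum>(i, j)\<in>E. pen (\<theta> (i, j)) (\<gamma> (i, j)) (x0 i) (x0 j))
      = pen (theta_or E \<theta> \<gamma> (ps ! m) (ps ! Suc m)) (gamma_or E \<theta> \<gamma> (ps ! m) (ps ! Suc m)) a b"
  proof -
    let ?e = "oe E (ps ! m) (ps ! Suc m)"
    let ?h = "\<lambda>e. case e of (i, j) \<Rightarrow> pen (\<theta> (i, j)) (\<gamma> (i, j)) (x0 i) (x0 j)"
    have eE: "?e \<in> E" by (rule oe_in[OF adjP[OF m]])
    have "(\<Sum>e\<in>E. ?h e) = (\<Sum>e\<in>E. if e = ?e then ?h ?e else 0)"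
    proof (intro sum.cong refl)
      fix e assume e: "e \<in> E"
      obtain i j where ij: "e = (i, j)" by (cases e)
      show "?h e = (if e = ?e then ?h ?e else 0)"
      proof (cases "e = ?e")
        case True then show ?thesis by simp
      next
        case False
        have "(i, j) \<noteq> (ps ! m, ps ! Suc m)" "(i, j) \<noteq> (ps ! Suc m, ps ! m)"
          using False e ij asym unfolding oe_def by (auto split: if_splits)
        then have "x0 i = x0 j" using x0e[of i j] e ij by simp
        then show ?thesis using False ij by (simp add: pen_eq0)
      qed
    qed
    also have "\<dots> = ?h ?e" using eE finE by (simp add: sum.delta)
    also have "\<dots> = penor E \<theta> \<gamma> x0 (ps ! m) (ps ! Suc m)" by (rule oe_pen)
    also have "\<dots> = pen (theta_or E \<theta> \<gamma> (ps ! m) (ps ! Suc m)) (gamma_or E \<theta> \<gamma> (ps ! m) (ps ! Suc m)) a b"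
      unfolding penor_def using x0n m by simp
    finally show ?thesis by (simp add: case_prod_beta)
  qed
  have gx0: "tree_gauge V E \<theta> \<gamma> x0 = C"
    unfolding tree_gauge_dec FEeq fpv penv using mval Cform by simp
  have x0S: "tree_gauge V E \<theta> \<gamma> x0 \<in> {tree_gauge V E \<theta> \<gamma> x | x. (\<forall>s\<in>V. 0 \<le> x s) \<and> x k = a \<and> x l = b}"
    using x0k x0l xs unfolding x0_def by auto
  have "marginal2 V (tree_gauge V E \<theta> \<gamma>) k l a b = C"
    unfolding marginal2_def
  proof (rule cInf_eq_minimum)
    show "C \<in> {tree_gauge V E \<theta> \<gamma> x | x. (\<forall>s\<in>V. 0 \<le> x s) \<and> x k = a \<and> x l = b}" using x0S gx0 by simp
  next
    fix y assume "y \<in> {tree_gauge V E \<theta> \<gamma> x | x. (\<forall>s\<in>V. 0 \<le> x s) \<and> x k = a \<and> x l = b}"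
    then show "C \<le> y" using lower by auto
  qed
  then show ?thesis unfolding C_def T_def G_def Let_def .
qed


end
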